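(* Let $q\ge8$ be even. For $\mu\in\mathbb{F}_q$ let $\ell_\mu$ be the line through $\mathbf{P}(0,\mu,0,1)$ and $\mathbf{P}(1,0,1,0)$, and let $L_c$ be the line through $\mathbf{P}(1,0,0,1)$ and $\mathbf{P}(0,0,1,0)$. Then for any $\mu',\mu''\in\mathbb{F}_q\setminus\{0,1\}$ with $\mu'\ne\mu''$, the lines $\ell_{\mu'}$ and $\ell_{\mu''}$ lie in different orbits of $G_q$. Moreover, no line $\ell_\mu$ with $\mu\in\mathbb{F}_q\setminus\{0,1\}$ lies in the $G_q$-orbit of $L_c$.
   Context: Points of $\mathrm{PG}(3,q)$ are written $\mathbf{P}(x_0,x_1,x_2,x_3)$ in homogeneous coordinates over the field $\mathbb{F}_q$. The twisted cubic is $\mathscr{C}=\{\mathbf{P}(t^3,t^2,t,1):t\in\mathbb{F}_q\}\cup\{\mathbf{P}(1,0,0,0)\}$ and $G_q$ is the group of projectivities of $\mathrm{PG}(3,q)$ fixing $\mathscr{C}$ (for $q\ge5$, $G_q\cong\mathrm{PGL}(2,q)$). Two lines lie in the same orbit if some element of $G_q$ maps one onto the other. *)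

theory Defs
  imports "HOL-Analysis.Analysis"
begin

text \<open>Projective space PG(3,q) over a finite field 'a: vectors in 'a^4 (coordinates
  x0,x1,x2,x3 are the components 1,2,3,4), a point is the set of nonzero scalar
  multiples of a nonzero vector.\<close>

definition pg_point :: "'a::field ^ 4 \<Rightarrow> ('a ^ 4) set" where
  "pg_point v = {c *s v | c. c \<noteq> 0}"

definition pt4 :: "'a::field \<Rightarrow> 'a \<Rightarrow> 'a \<Rightarrow> 'a \<Rightarrow> ('a ^ 4) set" where
  "pt4 x0 x1 x2 x3 = pg_point (vector [x0, x1, x2, x3])"

definition pg_line :: "'a::field ^ 4 \<Rightarrow> 'a ^ 4 \<Rightarrow> ('a ^ 4) set set" where
  "pg_line u w = {pg_point (a *s u + b *s w) | a b. a *s u + b *s w \<noteq> 0}"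

definition twisted_cubic :: "('a::field ^ 4) set set" where
  "twisted_cubic = {pt4 (t^3) (t^2) t 1 | t. True} \<union> {pt4 1 0 0 0}"

definition proj_map :: "'a::field ^ 4 ^ 4 \<Rightarrow> ('a ^ 4) set \<Rightarrow> ('a ^ 4) set" where
  "proj_map A P = (\<lambda>v. A *v v) ` P"

definition Gq :: "('a::field ^ 4 ^ 4) set" where
  "Gq = {A. invertible A \<and> proj_map A ` (twisted_cubic :: ('a ^ 4) set set) = twisted_cubic}"

definition same_orbit :: "('a::field ^ 4) set set \<Rightarrow> ('a ^ 4) set set \<Rightarrow> bool" where
  "same_orbit L1 L2 \<longleftrightarrow> (\<exists>A \<in> Gq. proj_map A ` L1 = L2)"

definition ell :: "'a::field \<Rightarrow> ('a ^ 4) set set" where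
  "ell \<mu> = pg_line (vector [0, \<mu>, 0, 1]) (vector [1, 0, 1, 0])"

definition Lc :: "('a::field ^ 4) set set" where
  "Lc = pg_line (vector [1, 0, 0, 1]) (vector [0, 0, 1, 0])"

end

theory Submission
  imports Defs "HOL-Computational_Algebra.Polynomial"
begin

lemma vector_4 [simp]:
 "(vector [x,y,z,w] ::('a::zero)^4)$1 = x"
 "(vector [x,y,z,w] ::('a::zero)^4)$2 = y"
 "(vector [x,y,z,w] ::('a::zero)^4)$3 = z"
 "(vector [x,y,z,w] ::('a::zero)^4)$4 = w"
  unfolding vector_def by simp_all

lemma vec4_eq: "(v::'a^4) = w \<longleftrightarrow> v$1 = w$1 \<and> v$2 = w$2 \<and> v$3 = w$3 \<and> v$4 = w$4"
  by (auto simp: vec_eq_iff forall_4)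

lemma mv4: "(A *v (v::'a::semiring_1^4)) $ i = A$i$1 * v$1 + A$i$2 * v$2 + A$i$3 * v$3 + A$i$4 * v$4"
  by (simp add: matrix_vector_mult_def sum_4)

lemma mv_smult: "A *v (c *s v) = c *s (A *v (v::'a::comm_ring_1^'n))"
  by (simp add: vec_eq_iff matrix_vector_mult_def sum_distrib_left mult_ac)

lemma char2:
  assumes "even CARD('a::{finite,field})"
  shows "(2::'a) = 0"
proof -
  let ?S = "UNIV - {0::'a}"
  have bij: "bij_betw (\<lambda>y. (-1) * y) ?S ?S"
    by (rule bij_betwI[where g="\<lambda>y. (-1)*y"]) auto
  have "(\<Prod>y\<in>?S. (-1) * y) = (\<Prod>y\<in>?S. y)"
    using prod.reindex_bij_betw[OF bij, of "\<lambda>y. y"] by simp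
  moreover have "(\<Prod>y\<in>?S. (-1) * y) = (-1)^card ?S * (\<Prod>y\<in>?S. y)"
    by (subst prod.distrib) simp
  moreover have "(\<Prod>y\<in>?S. y) \<noteq> 0" by simp
  ultimately have p: "(-1::'a)^card ?S = 1" by simp
  have "card ?S = CARD('a) - 1" by (simp add: card_Diff_singleton)
  moreover have "CARD('a) > 0" by simp
  ultimately have "odd (card ?S)" using assms by simp
  hence "(-1::'a) = 1" using p by simp
  thus ?thesis by (metis add.right_inverse one_add_one)
qed

lemma poly6:
  fixes c0 c1 c2 c3 c4 c5 c6 :: "'a::{finite,field}"
  assumes card: "CARD('a) \<ge> 7"
    and h: "\<And>t. c0 + c1*t + c2*t^2 + c3*t^3 + c4*t^4 + c5*t^5 + c6*t^6 = 0"
  shows "c0 = 0 \<and> c1 = 0 \<and> c2 = 0 \<and> c3 = 0 \<and> c4 = 0 \<and> c5 = 0 \<and> c6 = 0"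
proof -
  define p where "p = [:c0,c1,c2,c3,c4,c5,c6:]"
  have ev: "poly p t = c0 + c1*t + c2*t^2 + c3*t^3 + c4*t^4 + c5*t^5 + c6*t^6" for t
    by (simp add: p_def algebra_simps eval_nat_numeral)
  have "p = 0"
  proof (rule ccontr)
    assume "p \<noteq> 0"
    hence "card {x. poly p x = 0} \<le> degree p" by (rule card_poly_roots_bound)
    moreover have "{x. poly p x = 0} = UNIV" using ev h by auto
    moreover have "degree p \<le> 6" unfolding p_def
      by (rule le_trans[OF degree_pCons_le], simp)+
    ultimately show False using card by simp
  qed
  thus ?thesis by (simp add: p_def)
qed

definition onC :: "'a::field^4 \<Rightarrow> bool" where
  "onC v \<longleftrightarrow> (v$2)^2 = v$1 * v$3 \<and> (v$3)^2 = v$2 * v$4 \<and> v$1 * v$4 = v$2 * v$3"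

definition hv :: "'a::field \<Rightarrow> 'a \<Rightarrow> 'a^4" where
  "hv x y = vector [x^3, x^2*y, x*y^2, y^3]"

definition TM :: "'a::field \<Rightarrow> 'a \<Rightarrow> 'a \<Rightarrow> 'a \<Rightarrow> 'a^4 \<Rightarrow> 'a^4" where
  "TM a b c d v = vector [
     a^3* v$1 + 3*a^2*b* v$2 + 3*a*b^2* v$3 + b^3* v$4,
     a^2*c* v$1 + (a^2*d + 2*a*b*c)* v$2 + (2*a*b*d + b^2*c)* v$3 + b^2*d* v$4,
     a*c^2* v$1 + (2*a*c*d + b*c^2)* v$2 + (a*d^2 + 2*b*c*d)* v$3 + b*d^2* v$4,
     c^3* v$1 + 3*c^2*d* v$2 + 3*c*d^2* v$3 + d^3* v$4]"

definition TMmat :: "'a::field \<Rightarrow> 'a \<Rightarrow> 'a \<Rightarrow> 'a \<Rightarrow> 'a^4^4" where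
  "TMmat a b c d = vector [
     vector [a^3, 3*a^2*b, 3*a*b^2, b^3],
     vector [a^2*c, a^2*d + 2*a*b*c, 2*a*b*d + b^2*c, b^2*d],
     vector [a*c^2, 2*a*c*d + b*c^2, a*d^2 + 2*b*c*d, b*d^2],
     vector [c^3, 3*c^2*d, 3*c*d^2, d^3]]"

lemma TMmat: "TMmat a b c d *v v = TM a b c d v"
  by (simp add: vec4_eq mv4 TMmat_def TM_def)

lemma onC_hv: "onC (hv x y)"
  by (simp add: onC_def hv_def power2_eq_square power3_eq_cube algebra_simps)

lemma onC_smult: assumes "onC v" shows "onC (c *s v)"
proof -
  from assms have e: "(v$2)^2 = v$1 * v$3" "(v$3)^2 = v$2 * v$4" "v$1 * v$4 = v$2 * v$3"
    by (auto simp: onC_def)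
  have "(c* v$2)^2 = (c* v$1) * (c* v$3)" using e(1) by (simp add: power_mult_distrib power2_eq_square algebra_simps)
  moreover have "(c* v$3)^2 = (c* v$2) * (c* v$4)" using e(2) by (simp add: power_mult_distrib power2_eq_square algebra_simps)
  moreover have "(c* v$1) * (c* v$4) = (c* v$2) * (c* v$3)" using e(3) by (simp add: algebra_simps)
  ultimately show ?thesis by (simp add: onC_def)
qed

lemma onC_zero: "onC 0" by (simp add: onC_def)

lemma onC_decomp:
  assumes "onC v"
  shows "\<exists>al x y. v = al *s hv x y \<and> (x \<noteq> 0 \<or> y \<noteq> 0)"
proof (cases "v$4 = 0")
  case True
  with assms have "v$3 = 0" by (simp add: onC_def)
  with assms have "v$2 = 0" by (simp add: onC_def)
  have "v = v$1 *s hv 1 0" using True \<open>v$3 = 0\<close> \<open>v$2 = 0\<close> by (simp add: vec4_eq hv_def)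
  thus ?thesis by (intro exI[of _ "v$1"] exI[of _ 1] exI[of _ 0]) simp
next
  case False
  from assms have e: "(v$2)^2 = v$1 * v$3" "(v$3)^2 = v$2 * v$4" "v$1 * v$4 = v$2 * v$3"
    by (auto simp: onC_def)
  have e2: "v$2 = (v$3)^2 / v$4" using e(2) False by (simp add: field_simps)
  have e1: "v$1 = (v$3)^3 / (v$4)^2" using e(3) e2 False by (simp add: field_simps power2_eq_square power3_eq_cube)
  have "v = v$4 *s hv (v$3 / v$4) 1"
    using False e1 e2 by (simp add: vec4_eq hv_def power2_eq_square power3_eq_cube field_simps)
  thus ?thesis by (intro exI[of _ "v$4"] exI[of _ "v$3/v$4"] exI[of _ 1]) simp
qed

lemma pg_point_smult:
  fixes v :: "'a::field^4"
  assumes c: "c \<noteq> 0" shows "pg_point (c *s v) = pg_point v"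
proof
  show "pg_point (c *s v) \<subseteq> pg_point v"
  proof
    fix z assume "z \<in> pg_point (c *s v)"
    then obtain d where d: "d \<noteq> 0" "z = d *s (c *s v)" unfolding pg_point_def by auto
    hence "z = (d*c) *s v" "d * c \<noteq> 0" using c by (auto simp: vector_smult_assoc)
    thus "z \<in> pg_point v" unfolding pg_point_def by blast
  qed
next
  show "pg_point v \<subseteq> pg_point (c *s v)"
  proof
    fix z assume "z \<in> pg_point v"
    then obtain d where d: "d \<noteq> 0" "z = d *s v" unfolding pg_point_def by auto
    hence "z = (d/c) *s (c *s v)" "d / c \<noteq> 0" using c by (auto simp: vector_smult_assoc)
    thus "z \<in> pg_point (c *s v)" unfolding pg_point_def by blast
  qed
qed

lemma in_pg_point_self: "v \<in> pg_point v"
  unfolding pg_point_def by (intro CollectI exI[of _ 1]) simp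

lemma pg_point_eqD: "pg_point v = pg_point w \<Longrightarrow> \<exists>c. c \<noteq> 0 \<and> w = c *s v"
  using in_pg_point_self[of w] unfolding pg_point_def by auto

lemma proj_map_pg: "proj_map A (pg_point v) = pg_point (A *v v)"
  unfolding proj_map_def pg_point_def
  apply (auto simp: mv_smult)
  subgoal for c by (rule rev_image_eqI[of "c *s v"]) (auto simp: mv_smult)
  done

lemma hv_t1: "hv t 1 = vector [t^3, t^2, t, 1]" by (simp add: hv_def)

lemma tc_onC: "P \<in> twisted_cubic \<Longrightarrow> \<exists>w. P = pg_point w \<and> onC w"
  unfolding twisted_cubic_def pt4_def
proof safe
  fix t :: 'a
  show "\<exists>w. pg_point (vector [t ^ 3, t\<^sup>2, t, 1]) = pg_point w \<and> onC w"
    using onC_hv[of t 1] by (auto simp: hv_t1)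
next
  show "\<exists>w. pg_point (vector [1, 0, 0, 0]) = pg_point w \<and> onC w"
    using onC_hv[of 1 0] by (auto simp: hv_def)
qed

lemma onC_tc: assumes "onC v" "v \<noteq> 0" shows "pg_point v \<in> twisted_cubic"
proof -
  obtain al x y where v: "v = al *s hv x y" and xy: "x \<noteq> 0 \<or> y \<noteq> 0" using onC_decomp[OF assms(1)] by blast
  have al: "al \<noteq> 0" using v assms(2) by auto
  show ?thesis
  proof (cases "y = 0")
    case True
    hence x: "x \<noteq> 0" using xy by simp
    have "hv x y = x^3 *s hv 1 0" using True by (simp add: vec4_eq hv_def)
    hence "pg_point v = pt4 1 0 0 0" using v al x by (simp add: pg_point_smult pt4_def hv_def)
    thus ?thesis unfolding twisted_cubic_def by simp
  next
    case False
    have "hv x y = y^3 *s hv (x/y) 1" using False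
      by (simp add: vec4_eq hv_def field_simps power2_eq_square power3_eq_cube)
    hence "pg_point v = pt4 ((x/y)^3) ((x/y)^2) (x/y) 1" using v al False by (simp add: pg_point_smult pt4_def hv_t1)
    thus ?thesis unfolding twisted_cubic_def by blast
  qed
qed

lemma Gq_onC: assumes "A \<in> Gq" "onC v" shows "onC (A *v v)"
proof (cases "v = 0")
  case True thus ?thesis by (simp add: onC_zero)
next
  case False
  have "pg_point v \<in> twisted_cubic" using onC_tc[OF assms(2) False] .
  hence "proj_map A (pg_point v) \<in> proj_map A ` twisted_cubic" by blast
  also have "\<dots> = twisted_cubic" using assms(1) by (simp add: Gq_def)
  finally have "pg_point (A *v v) \<in> twisted_cubic" by (simp add: proj_map_pg)
  then obtain w where w: "pg_point (A *v v) = pg_point w" "onC w" using tc_onC by blast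
  from pg_point_eqD[OF w(1)[symmetric]] obtain c where "A *v v = c *s w" by blast
  thus ?thesis using onC_smult[OF w(2)] by simp
qed

lemma TM_hv: "TM a b c d (hv x y) = hv (a*x+b*y) (c*x+d*y)"
  by (simp add: TM_def hv_def vec4_eq algebra_simps power2_eq_square power3_eq_cube)

lemma TM_smult: "TM a b c d (k *s v) = k *s TM a b c d v"
  by (simp add: TM_def vec4_eq algebra_simps)

lemma TM_id: "TM 1 0 0 1 v = v"
  by (simp add: TM_def vec4_eq)

lemma TM_comp: "TM a b c d (TM e f g h v) = TM (a*e+b*g) (a*f+b*h) (c*e+d*g) (c*f+d*h) v"
  by (simp add: TM_def vec4_eq algebra_simps power2_eq_square power3_eq_cube)

lemma TM_onC: assumes "onC v" shows "onC (TM a b c d v)"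
proof -
  obtain al x y where "v = al *s hv x y" using onC_decomp[OF assms] by blast
  thus ?thesis by (simp add: TM_smult TM_hv onC_smult onC_hv)
qed

lemma normal:
  fixes N :: "'a::{finite,field}^4^4"
  assumes card: "CARD('a) \<ge> 7"
    and z: "N$2$1 = 0" "N$3$1 = 0" "N$4$1 = 0" "N$1$4 = 0" "N$2$4 = 0" "N$3$4 = 0"
    and nz: "N$1$1 \<noteq> 0" "N$4$4 \<noteq> 0"
    and C: "\<And>t. onC (N *v hv t 1)"
  shows "\<exists>l k. l \<noteq> 0 \<and> k \<noteq> 0 \<and> (\<forall>v. N *v v = l *s TM k 0 0 1 v)"
proof -
  define n11 where "n11 = N$1$1"
  define n12 where "n12 = N$1$2"
  define n13 where "n13 = N$1$3"
  define n22 where "n22 = N$2$2"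
  define n23 where "n23 = N$2$3"
  define n32 where "n32 = N$3$2"
  define n33 where "n33 = N$3$3"
  define n42 where "n42 = N$4$2"
  define n43 where "n43 = N$4$3"
  define n44 where "n44 = N$4$4"
  have Nv: "N *v hv t 1 = vector [n11*t^3 + n12*t^2 + n13*t, n22*t^2+n23*t, n32*t^2+n33*t, n42*t^2+n43*t+n44]" for t
    by (simp add: vec4_eq mv4 hv_def z n11_def n12_def n13_def n22_def n23_def n32_def n33_def n42_def n43_def n44_def)
  have Q: "(n22*t^2+n23*t)^2 = (n11*t^3 + n12*t^2 + n13*t) * (n32*t^2+n33*t)"
     "(n32*t^2+n33*t)^2 = (n22*t^2+n23*t) * (n42*t^2+n43*t+n44)"
     "(n11*t^3 + n12*t^2 + n13*t) * (n42*t^2+n43*t+n44) = (n22*t^2+n23*t) * (n32*t^2+n33*t)" for t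
    using C[of t] unfolding Nv by (simp_all add: onC_def)
  have P1: "0 + 0*t + (n23^2 - n13*n33)*t^2 + (2*n22*n23 - n12*n33 - n13*n32)*t^3
      + (n22^2 - n11*n33 - n12*n32)*t^4 + (- n11*n32)*t^5 + 0*t^6 = 0" for t
    using Q(1)[of t] by algebra
  have P2: "0 + (- n23*n44)*t + (n33^2 - n22*n44 - n23*n43)*t^2 + (2*n32*n33 - n22*n43 - n23*n42)*t^3
      + (n32^2 - n22*n42)*t^4 + 0*t^5 + 0*t^6 = 0" for t
    using Q(2)[of t] by algebra
  have P3: "0 + (n13*n44)*t + (n12*n44 + n13*n43 - n23*n33)*t^2 + (n11*n44 + n12*n43 + n13*n42 - n22*n33 - n23*n32)*t^3
      + (n11*n43 + n12*n42 - n22*n32)*t^4 + (n11*n42)*t^5 + 0*t^6 = 0" for t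
    using Q(3)[of t] by algebra
  note R1 = poly6[OF card P1] and R2 = poly6[OF card P2] and R3 = poly6[OF card P3]
  have nz': "n11 \<noteq> 0" "n44 \<noteq> 0" using nz by (simp_all add: n11_def n44_def)
  have z23: "n23 = 0" using R2 nz' by simp
  have z13: "n13 = 0" using R3 nz' by simp
  have z32: "n32 = 0" using R1 nz' by simp
  have z42: "n42 = 0" using R3 nz' by simp
  have z12: "n12 = 0" using R3 nz' z13 z23 by simp
  have z43: "n43 = 0" using R3 nz' z12 z42 z32 by simp
  have r1: "n33^2 = n22*n44" using R2 z23 by simp
  have r2: "n22^2 = n11*n33" using R1 z32 z12 by simp
  have r3: "n11*n44 = n22*n33" using R3 z12 z13 z23 z32 z43 z42 by simp
  have n33: "n33 \<noteq> 0" using r3 nz' by auto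
  define k where "k = n33 / n44"
  have k: "k \<noteq> 0" using n33 nz' by (simp add: k_def)
  have e3: "n33 = n44 * k" using nz' by (simp add: k_def)
  have e2: "n22 = n44 * k^2" using r1 nz' by (simp add: k_def field_simps power2_eq_square)
  have e1: "n11 = n44 * k^3" using r3 e2 e3 nz' by (simp add: field_simps power2_eq_square power3_eq_cube)
  have "\<forall>v. N *v v = n44 *s TM k 0 0 1 v"
  proof
    fix v
    show "N *v v = n44 *s TM k 0 0 1 v"
      using z z12 z13 z23 z32 z42 z43
      by (simp add: vec4_eq mv4 TM_def e1 e2 e3 n11_def[symmetric] n12_def[symmetric] n13_def[symmetric] n22_def[symmetric]
        n23_def[symmetric] n32_def[symmetric] n33_def[symmetric] n42_def[symmetric] n43_def[symmetric] n44_def[symmetric] algebra_simps)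
  qed
  thus ?thesis using nz' k by blast
qed

lemma Gq_form:
  fixes A :: "'a::{finite,field}^4^4"
  assumes G: "A \<in> Gq" and card: "CARD('a) \<ge> 7"
  shows "\<exists>a b c d l. l \<noteq> 0 \<and> a*d - b*c \<noteq> 0 \<and> (\<forall>v. A *v v = l *s TM a b c d v)"
proof -
  have "invertible A" using G by (simp add: Gq_def)
  hence injA: "v = 0" if "A *v v = 0" for v
    using inj_matrix_vector_mult[of A] that by (metis injD matrix_vector_mult_0_right)
  obtain al x1 y1 where c1: "A *v hv 1 0 = al *s hv x1 y1" and xy1: "x1 \<noteq> 0 \<or> y1 \<noteq> 0"
    using onC_decomp[OF Gq_onC[OF G onC_hv]] by blast
  obtain de x4 y4 where c4: "A *v hv 0 1 = de *s hv x4 y4" and xy4: "x4 \<noteq> 0 \<or> y4 \<noteq> 0"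
    using onC_decomp[OF Gq_onC[OF G onC_hv]] by blast
  have al: "al \<noteq> 0"
  proof
    assume "al = 0" hence "hv 1 0 = (0::'a^4)" using c1 injA by simp
    thus False by (simp add: vec4_eq hv_def)
  qed
  have de: "de \<noteq> 0"
  proof
    assume "de = 0" hence "hv 0 1 = (0::'a^4)" using c4 injA by simp
    thus False by (simp add: vec4_eq hv_def)
  qed
  define D where "D = x1*y4 - x4*y1"
  have D: "D \<noteq> 0"
  proof
    assume D0: "D = 0"
    obtain ka where ka: "hv x4 y4 = ka *s hv x1 y1"
    proof (cases "x1 = 0")
      case True
      hence "y1 \<noteq> 0" "x4 = 0" using xy1 D0 by (auto simp: D_def)
      thus ?thesis using True by (intro that[of "(y4/y1)^3"]) (simp add: vec4_eq hv_def field_simps power3_eq_cube)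
    next
      case False
      hence y4: "y4 = x4*y1/x1" using D0 by (simp add: D_def field_simps)
      show ?thesis using False by (intro that[of "(x4/x1)^3"]) (simp add: y4 vec4_eq hv_def field_simps power2_eq_square power3_eq_cube)
    qed
    have "A *v (hv 0 1 - (de*ka/al) *s hv 1 0) = 0"
      using c1 c4 ka al by (simp add: matrix_vector_mult_diff_distrib mv_smult vector_smult_assoc)
    hence "hv 0 1 - (de*ka/al) *s hv 1 0 = (0::'a^4)" by (rule injA)
    thus False by (simp add: vec4_eq hv_def)
  qed
  define a' where "a' = y4/D"
  define b' where "b' = -x4/D"
  define c' where "c' = -y1/D"
  define d' where "d' = x1/D"
  define N where "N = TMmat a' b' c' d' ** A"
  have Nv: "N *v v = TM a' b' c' d' (A *v v)" for v
    by (simp add: N_def matrix_vector_mul_assoc[symmetric] TMmat)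
  have DD: "(x1*y4 - x4*y1)/D = 1" using D by (simp add: D_def[symmetric])
  have X1: "a'*x1 + b'*y1 = 1" "c'*x1 + d'*y1 = 0" "a'*x4 + b'*y4 = 0" "c'*x4 + d'*y4 = 1"
    using D DD by (simp_all add: a'_def b'_def c'_def d'_def field_simps)
  have N1: "N *v hv 1 0 = al *s hv 1 0"
    unfolding Nv c1 TM_smult TM_hv X1 ..
  have N4: "N *v hv 0 1 = de *s hv 0 1"
    unfolding Nv c4 TM_smult TM_hv X1 ..
  have "N$2$1 = 0" "N$3$1 = 0" "N$4$1 = 0" "N$1$1 \<noteq> 0"
    using N1 al by (simp_all add: vec4_eq mv4 hv_def)
  moreover have "N$1$4 = 0" "N$2$4 = 0" "N$3$4 = 0" "N$4$4 \<noteq> 0"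
    using N4 de by (simp_all add: vec4_eq mv4 hv_def)
  moreover have "onC (N *v hv t 1)" for t
    unfolding Nv by (intro TM_onC Gq_onC[OF G] onC_hv)
  ultimately obtain l k where lk: "l \<noteq> 0" "k \<noteq> 0" "\<forall>v. N *v v = l *s TM k 0 0 1 v"
    using normal[OF card, of N] by blast
  have inv: "TM x1 x4 y1 y4 (TM a' b' c' d' w) = w" for w
  proof -
    have "TM x1 x4 y1 y4 (TM a' b' c' d' w) = TM 1 0 0 1 w"
    proof -
      have "x1*a' + x4*c' = 1" "x1*b' + x4*d' = 0" "y1*a' + y4*c' = 0" "y1*b' + y4*d' = 1"
        using D DD by (simp_all add: a'_def b'_def c'_def d'_def field_simps)
      thus ?thesis unfolding TM_comp by simp
    qed
    thus ?thesis by (simp add: TM_id)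
  qed
  have "A *v v = l *s TM (x1*k) x4 (y1*k) y4 v" for v
  proof -
    have "A *v v = TM x1 x4 y1 y4 (N *v v)" unfolding Nv inv ..
    also have "\<dots> = l *s TM (x1*k) x4 (y1*k) y4 v" using lk(3) by (simp add: TM_smult TM_comp)
    finally show ?thesis .
  qed
  moreover have "(x1*k)*y4 - x4*(y1*k) \<noteq> 0" using D lk(2) by (simp add: D_def algebra_simps)
  ultimately show ?thesis using lk(1) by blast
qed

lemma ell_memD: assumes "pg_point z \<in> ell m" shows "z$1 = z$3 \<and> z$2 = m * z$4"
proof -
  obtain a b where "pg_point z = pg_point (a *s vector[0,m,0,1] + b *s vector[1,0,1,0])"
    using assms unfolding ell_def pg_line_def by blast
  from pg_point_eqD[OF this[symmetric]] obtain c where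
    "z = c *s (a *s vector[0,m,0,1] + b *s vector[1,0,1,0])" by blast
  thus ?thesis by (simp add: algebra_simps)
qed

lemma pg_line_mem1: assumes "u \<noteq> 0" shows "pg_point u \<in> pg_line u w"
proof -
  have e: "1 *s u + 0 *s w = u" by (simp add: vec_eq_iff)
  show ?thesis unfolding pg_line_def
    by (rule CollectI, rule exI[of _ 1], rule exI[of _ 0]) (simp add: e assms)
qed

lemma pg_line_mem2: assumes "w \<noteq> 0" shows "pg_point w \<in> pg_line u w"
proof -
  have e: "0 *s u + 1 *s w = w" by (simp add: vec_eq_iff)
  show ?thesis unfolding pg_line_def
    by (rule CollectI, rule exI[of _ 0], rule exI[of _ 1]) (simp add: e assms)
qed

lemma orbit_cond:
  assumes "proj_map A ` L = ell m" "pg_point z \<in> L"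
  shows "(A *v z)$1 = (A *v z)$3 \<and> (A *v z)$2 = m * (A *v z)$4"
proof -
  have "proj_map A (pg_point z) \<in> ell m" using assms by blast
  thus ?thesis by (simp add: proj_map_pg ell_memD)
qed

lemma char2_facts:
  assumes two: "(2::'a::field) = 0"
  shows "(3::'a) = 1" "\<And>x::'a. -x = x" "\<And>x y::'a. x + y = 0 \<longleftrightarrow> x = y"
proof -
  have "(3::'a) = 2 + 1" by simp
  thus "(3::'a) = 1" using two by simp
  show neg: "-x = x" for x::'a
  proof -
    have "x + x = 2 * x" by simp
    hence "x + x = 0" using two by simp
    thus ?thesis by (simp add: add_eq_0_iff)
  qed
  show "x + y = 0 \<longleftrightarrow> x = y" for x y :: 'a
    by (metis add_eq_0_iff neg)
qed

lemma part1_alg: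
  fixes a b c d p r :: "'a::field"
  assumes two: "(2::'a) = 0" and det: "a*d - b*c \<noteq> 0" and sr: "p \<noteq> r" and r1: "r \<noteq> 1"
  and h1: "TM a b c d (vector[0,p^2,0,1]) $1 = TM a b c d (vector[0,p^2,0,1]) $3"
  and h2: "TM a b c d (vector[0,p^2,0,1]) $2 = r^2 * TM a b c d (vector[0,p^2,0,1]) $4"
  and h3: "TM a b c d (vector[1,0,1,0]) $1 = TM a b c d (vector[1,0,1,0]) $3"
  and h4: "TM a b c d (vector[1,0,1,0]) $2 = r^2 * TM a b c d (vector[1,0,1,0]) $4"
  shows False
proof -
  note cf = char2_facts[OF two]
  have E1: "b * ((a+c)*p + b + d)^2 = TM a b c d (vector[0,p^2,0,1]) $1 + TM a b c d (vector[0,p^2,0,1]) $3"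
    using two cf(1) by (simp add: TM_def algebra_simps power2_eq_square power3_eq_cube)
  have E2: "d * (a*p + b + r*(c*p+d))^2 = TM a b c d (vector[0,p^2,0,1]) $2 + r^2 * TM a b c d (vector[0,p^2,0,1]) $4"
    using two cf(1) by (simp add: TM_def algebra_simps power2_eq_square power3_eq_cube)
  have E3: "a * (a+b+c+d)^2 = TM a b c d (vector[1,0,1,0]) $1 + TM a b c d (vector[1,0,1,0]) $3"
    using two cf(1) by (simp add: TM_def algebra_simps power2_eq_square power3_eq_cube)
  have E4: "c * (a+b+r*(c+d))^2 = TM a b c d (vector[1,0,1,0]) $2 + r^2 * TM a b c d (vector[1,0,1,0]) $4"
    using two cf(1) by (simp add: TM_def algebra_simps power2_eq_square power3_eq_cube)
  have C1: "b = 0 \<or> (a+c)*p + b + d = 0"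
  proof -
    have xx: "x + x = 0" for x :: 'a using cf(3)[of x x] by blast
    have "E = 0" if "E = X + X" for E X :: 'a by (simp only: that xx)
    from this[OF E1[unfolded h1]] show ?thesis by simp
  qed
  have C2: "d = 0 \<or> a*p + b + r*(c*p+d) = 0"
  proof -
    have xx: "x + x = 0" for x :: 'a using cf(3)[of x x] by blast
    have "E = 0" if "E = X + X" for E X :: 'a by (simp only: that xx)
    from this[OF E2[unfolded h2]] show ?thesis by simp
  qed
  have C3: "a = 0 \<or> a+b+c+d = 0"
  proof -
    have xx: "x + x = 0" for x :: 'a using cf(3)[of x x] by blast
    have "E = 0" if "E = X + X" for E X :: 'a by (simp only: that xx)
    from this[OF E3[unfolded h3]] show ?thesis by simp
  qed
  have C4: "c = 0 \<or> a+b+r*(c+d) = 0"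
  proof -
    have xx: "x + x = 0" for x :: 'a using cf(3)[of x x] by blast
    have "E = 0" if "E = X + X" for E X :: 'a by (simp only: that xx)
    from this[OF E4[unfolded h4]] show ?thesis by simp
  qed
  have xx: "x + x = 0" for x :: 'a using cf(3)[of x x] by blast
  show False
  proof (cases "b = 0")
    case b: True
    hence ad: "a \<noteq> 0" "d \<noteq> 0" using det by auto
    have "a + c + d = 0" using C3 ad b by simp
    hence "(a + d) + c = 0" by (simp add: ac_simps)
    hence c: "a + d = c" using cf(3) by blast
    have "a*p + r*(c*p+d) = 0" using C2 ad b by simp
    hence as: "a*p = r*(c*p+d)" using cf(3) by blast
    show False
    proof (cases "c = 0")
      case True
      hence "a = d" using c cf(3) by simp
      hence "a*p = a*r" using as True by (simp add: algebra_simps)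
      thus False using sr ad by simp
    next
      case False
      hence "a + r*(c+d) = 0" using C4 b by simp
      hence "a = r*(c+d)" using cf(3) by blast
      moreover have "c + d = a" using c xx[of d] by (metis add.assoc add_0_right)
      ultimately have "a * 1 = a * r" by (simp add: algebra_simps)
      thus False using ad r1 by (metis mult_left_cancel)
    qed
  next
    case b: False
    hence c1: "(a+c)*p + b + d = 0" using C1 by simp
    show False
    proof (cases "d = 0")
      case d: True
      hence c: "c \<noteq> 0" using det by auto
      hence "a + b + r*c = 0" using C4 d by simp
      hence c4: "a + b = r*c" using cf(3) by blast
      show False
      proof (cases "a = 0")
        case True
        hence "c*p + b = 0" using c1 d by simp
        hence "c*p = b" using cf(3) by blast
        hence "c*p = c*r" using c4 True by (simp add: algebra_simps)
        thus False using c sr by simp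
      next
        case False
        hence "a + b + c = 0" using C3 d by simp
        hence "a + b = c" using cf(3) by blast
        hence "c * 1 = c * r" using c4 by simp
        thus False using c r1 by (metis mult_left_cancel)
      qed
    next
      case d: False
      hence c2: "a*p + b + r*(c*p+d) = 0" using C2 by simp
      have "(r - 1) * (c*p + d) = (a*p + b + r*(c*p+d)) - ((a+c)*p + b + d)" by (simp add: algebra_simps)
      hence "(r - 1) * (c*p + d) = 0" using c1 c2 by simp
      hence e: "c*p + d = 0" using r1 by simp
      have "a*p + b = ((a+c)*p + b + d) - (c*p + d)" by (simp add: algebra_simps)
      hence f: "a*p + b = 0" using c1 e by simp
      have "a*d - b*c = a*(c*p + d) - c*(a*p + b)" by (simp add: algebra_simps)
      hence "a*d - b*c = 0" using e f by simp
      thus False using det by simp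
    qed
  qed
qed

lemma part2_alg:
  fixes a b c d p :: "'a::field"
  assumes two: "(2::'a) = 0" and det: "a*d - b*c \<noteq> 0" and p1: "p \<noteq> 1"
  and h1: "TM a b c d (vector[1,0,0,1]) $1 = TM a b c d (vector[1,0,0,1]) $3"
  and h3: "TM a b c d (vector[0,0,1,0]) $1 = TM a b c d (vector[0,0,1,0]) $3"
  and h4: "TM a b c d (vector[0,0,1,0]) $2 = p^2 * TM a b c d (vector[0,0,1,0]) $4"
  shows False
proof -
  note cf = char2_facts[OF two]
  have xx: "x + x = 0" for x :: 'a using cf(3)[of x x] by blast
  have z: "E = 0" if "E = X + X" for E X :: 'a by (simp only: that xx)
  have E3: "a * (b+d)^2 = TM a b c d (vector[0,0,1,0]) $1 + TM a b c d (vector[0,0,1,0]) $3"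
    using two cf(1) by (simp add: TM_def algebra_simps power2_eq_square power3_eq_cube)
  have E4: "c * (b+p*d)^2 = TM a b c d (vector[0,0,1,0]) $2 + p^2 * TM a b c d (vector[0,0,1,0]) $4"
    using two cf(1) by (simp add: TM_def algebra_simps power2_eq_square power3_eq_cube)
  have C3: "a = 0 \<or> b + d = 0" using z[OF E3[unfolded h3]] by simp
  hence C3': "a = 0 \<or> b = d" using cf(3) by blast
  have C4: "c = 0 \<or> b + p*d = 0" using z[OF E4[unfolded h4]] by simp
  hence C4': "c = 0 \<or> b = p*d" using cf(3) by blast
  have U: "a^3 + b^3 = a*c^2 + b*d^2" using h1 by (simp add: TM_def)
  have sq: "(x+y)^2 = x^2 + y^2" for x y :: 'a
    using two by (simp add: algebra_simps power2_eq_square)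
  show False
  proof (cases "a = 0")
    case a: True
    hence bc: "b \<noteq> 0" "c \<noteq> 0" using det by auto
    hence bpd: "b = p*d" using C4' by simp
    have "b * b^2 = b * d^2" using U a by (simp add: power3_eq_cube power2_eq_square algebra_simps)
    hence "b^2 = d^2" using bc by simp
    hence "(b+d)^2 = 0" using sq xx by simp
    hence "b = d" using cf(3) by simp
    hence "d * 1 = d * p" using bpd by (simp add: algebra_simps)
    moreover have "d \<noteq> 0" using bc \<open>b = d\<close> by simp
    ultimately show False using p1 by (metis mult_left_cancel)
  next
    case a: False
    hence bd: "b = d" using C3' by simp
    hence b: "b \<noteq> 0" using det by auto
    have c: "c = 0"
    proof (rule ccontr)
      assume "c \<noteq> 0"
      hence "b * 1 = b * p" using C4' bd by (simp add: algebra_simps)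
      thus False using b p1 by (metis mult_left_cancel)
    qed
    have "a^3 = 0" using U c bd by (simp add: power2_eq_square power3_eq_cube)
    thus False using a by simp
  qed
qed

lemma sq_surj:
  fixes x :: "'a::{finite,field}"
  assumes two: "(2::'a) = 0"
  shows "\<exists>p. x = p^2"
proof -
  note cf = char2_facts[OF two]
  have "inj (\<lambda>x::'a. x^2)"
  proof (rule injI)
    fix x y :: 'a assume h: "x^2 = y^2"
    have "(x+y)^2 = x^2 + y^2" using two by (simp add: algebra_simps power2_eq_square)
    also have "\<dots> = 0" using cf(3)[of "y^2" "y^2"] by (simp only: h)
    finally have "x + y = 0" by simp
    thus "x = y" using cf(3) by blast
  qed
  hence "surj (\<lambda>x::'a. x^2)" by (simp add: finite_UNIV_inj_surj)
  hence "x \<in> range (\<lambda>x::'a. x^2)" by simp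
  thus ?thesis by blast
qed

theorem theorem5p3:
  assumes "even CARD('a)" and "CARD('a) \<ge> 8"
  shows "(\<forall>(\<mu>'::'a::{finite,field}) \<mu>''. \<mu>' \<notin> {0, 1} \<and> \<mu>'' \<notin> {0, 1} \<and> \<mu>' \<noteq> \<mu>''
            \<longrightarrow> \<not> same_orbit (ell \<mu>') (ell (\<mu>'' :: 'a)))
       \<and> (\<forall>\<mu>. \<mu> \<notin> {0, 1} \<longrightarrow> \<not> same_orbit (Lc :: ('a ^ 4) set set) (ell \<mu>))"
proof -
  have two: "(2::'a) = 0" using char2[OF assms(1)] .
  have card: "CARD('a) \<ge> 7" using assms(2) by simp
  have nz: "vector [0, m, 0, 1] \<noteq> (0::'a^4)" "vector [1, 0, 1, 0] \<noteq> (0::'a^4)"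
    "vector [1, 0, 0, 1] \<noteq> (0::'a^4)" "vector [0, 0, 1, 0] \<noteq> (0::'a^4)" for m :: 'a
    by (simp_all add: vec4_eq)
  have cond: "l * (TM a b c d z)$1 = l * (TM a b c d z)$3 \<and> l * (TM a b c d z)$2 = m * (l * (TM a b c d z)$4)"
    if "proj_map A ` L = ell m" "pg_point z \<in> L" "\<forall>v. A *v v = l *s TM a b c d v" for A L m l a b c d z
    using orbit_cond[OF that(1,2)] that(3) by simp
  show ?thesis
  proof (intro conjI allI impI notI)
    fix m1 m2 :: 'a
    assume ms: "m1 \<notin> {0, 1} \<and> m2 \<notin> {0, 1} \<and> m1 \<noteq> m2" and so: "same_orbit (ell m1) (ell m2)"
    from so obtain A where A: "A \<in> Gq" "proj_map A ` ell m1 = ell m2" unfolding same_orbit_def by blast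
    obtain a b c d l where F: "l \<noteq> 0" "a*d - b*c \<noteq> 0" "\<forall>v. A *v v = l *s TM a b c d v"
      using Gq_form[OF A(1) card] by blast
    obtain p where p: "m1 = p^2" using sq_surj[OF two] by blast
    obtain r where r: "m2 = r^2" using sq_surj[OF two] by blast
    have pr: "p \<noteq> r" using ms p r by auto
    have r1: "r \<noteq> 1" using ms r by auto
    have u: "pg_point (vector [0, m1, 0, 1]) \<in> ell m1" unfolding ell_def by (rule pg_line_mem1[OF nz(1)])
    have w: "pg_point (vector [1, 0, 1, 0]) \<in> ell m1" unfolding ell_def by (rule pg_line_mem2[OF nz(2)])
    note cu = cond[OF A(2) u F(3)] and cw = cond[OF A(2) w F(3)]
    show False
      using part1_alg[OF two F(2) pr r1] cu cw F(1) unfolding p r by simp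
  next
    fix m :: 'a
    assume ms: "m \<notin> {0, 1}" and so: "same_orbit Lc (ell m)"
    from so obtain A where A: "A \<in> Gq" "proj_map A ` Lc = ell m" unfolding same_orbit_def by blast
    obtain a b c d l where F: "l \<noteq> 0" "a*d - b*c \<noteq> 0" "\<forall>v. A *v v = l *s TM a b c d v"
      using Gq_form[OF A(1) card] by blast
    obtain p where p: "m = p^2" using sq_surj[OF two] by blast
    have p1: "p \<noteq> 1" using ms p by auto
    have u: "pg_point (vector [1, 0, 0, 1]) \<in> (Lc::('a^4) set set)" unfolding Lc_def by (rule pg_line_mem1[OF nz(3)])
    have w: "pg_point (vector [0, 0, 1, 0]) \<in> (Lc::('a^4) set set)" unfolding Lc_def by (rule pg_line_mem2[OF nz(4)])
    note cu = cond[OF A(2) u F(3)] and cw = cond[OF A(2) w F(3)]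
    show False
      using part2_alg[OF two F(2) p1] cu cw F(1) unfolding p by simp
  qed
qed

end
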